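(* For every RelReach instance with $\mathsf{comp}\in\{\ge,>,\not\approx_\epsilon\mid \epsilon\in\mathbb Q_{\ge0}\}$ satisfying one of the conditions (a) $n=m$; (b) for all $i,i'$: $k_i=k_{i'}\Rightarrow s_i=s_{i'}$, and all $T_i$ are absorbing; (c) for all $i,i'$: $k_i=k_{i'}\Rightarrow((q_i\ge0\iff q_{i'}\ge 0)\wedge T_i=T_{i'})$, the property holds when quantifying over general schedulers if and only if it holds when quantifying over memoryless deterministic schedulers.
   Context: An MDP is $\mathcal M=(S,\mathrm{Act},P)$ with $S,\mathrm{Act}$ finite non-empty and $P:S\times\mathrm{Act}\times S\to[0,1]$ such that each state has a non-empty set of enabled actions $\alpha$ (with $\sum_{s'}P(s,\alpha,s')=1$), and $\sum_{s'}P(s,\alpha,s')=0$ for others. A state is absorbing if $P(s,\alpha,s)=1$ for all enabled $\alpha$; a set is absorbing if all its states are. A general scheduler maps finite paths to distributions over enabled actions of the last state; a memoryless deterministic (MD) scheduler chooses one enabled action depending only on the current state. $\Pr^\sigma_s(\Diamond T)$ is the probability of eventually reaching $T$ from $s$ under $\sigma$. A RelReach property is $\exists \sigma_1,\ldots,\sigma_n.~\sum_{i=1}^m q_i\Pr^{\sigma_{k_i}}_{s_i}(\Diamond T_i)\ \mathsf{comp}\ q_{m+1}$ with $m\ge n$, $q_i\in\mathbb Q$, $s_i\in S$, $\{k_1,\dots,k_m\}=\{1,\dots,n\}$, $T_i\subseteq S$; $r\not\approx_\epsilon r'$ iff $|r-r'|>\epsilon$. *)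

theory Defs
  imports Complex_Main
begin

definition enabled :: "('s \<Rightarrow> 'a \<Rightarrow> 's \<Rightarrow> real) \<Rightarrow> 's \<Rightarrow> 'a set" where
  "enabled P s = {\<alpha>. (\<Sum>s'\<in>UNIV. P s \<alpha> s') = 1}"

definition is_mdp :: "('s::finite \<Rightarrow> 'a::finite \<Rightarrow> 's \<Rightarrow> real) \<Rightarrow> bool" where
  "is_mdp P \<longleftrightarrow> (\<forall>s \<alpha> s'. 0 \<le> P s \<alpha> s' \<and> P s \<alpha> s' \<le> 1)
     \<and> (\<forall>s \<alpha>. (\<Sum>s'\<in>UNIV. P s \<alpha> s') = 1 \<or> (\<Sum>s'\<in>UNIV. P s \<alpha> s') = 0)
     \<and> (\<forall>s. enabled P s \<noteq> {})"

definition absorbing_set :: "('s \<Rightarrow> 'a \<Rightarrow> 's \<Rightarrow> real) \<Rightarrow> 's set \<Rightarrow> bool" where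
  "absorbing_set P T \<longleftrightarrow> (\<forall>s\<in>T. \<forall>\<alpha>\<in>enabled P s. P s \<alpha> s = 1)"

text \<open>A general scheduler: given the history (list of visited state/chosen action
  pairs) and the current state, a probability distribution over actions, supported on
  the enabled actions of the current state.\<close>

type_synonym ('s, 'a) sched = "('s \<times> 'a) list \<Rightarrow> 's \<Rightarrow> 'a \<Rightarrow> real"

definition is_sched :: "('s \<Rightarrow> 'a::finite \<Rightarrow> 's \<Rightarrow> real) \<Rightarrow> ('s, 'a) sched \<Rightarrow> bool" where
  "is_sched P \<sigma> \<longleftrightarrow> (\<forall>h s \<alpha>. 0 \<le> \<sigma> h s \<alpha> \<and> (\<sigma> h s \<alpha> \<noteq> 0 \<longrightarrow> \<alpha> \<in> enabled P s))
     \<and> (\<forall>h s. (\<Sum>\<alpha>\<in>UNIV. \<sigma> h s \<alpha>) = 1)"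

definition is_md_sched :: "('s \<Rightarrow> 'a \<Rightarrow> 's \<Rightarrow> real) \<Rightarrow> ('s \<Rightarrow> 'a) \<Rightarrow> bool" where
  "is_md_sched P d \<longleftrightarrow> (\<forall>s. d s \<in> enabled P s)"

definition md_to_sched :: "('s \<Rightarrow> 'a) \<Rightarrow> ('s, 'a) sched" where
  "md_to_sched d = (\<lambda>h s \<alpha>. if \<alpha> = d s then 1 else 0)"

fun reach_within :: "('s::finite \<Rightarrow> 'a::finite \<Rightarrow> 's \<Rightarrow> real) \<Rightarrow> ('s, 'a) sched \<Rightarrow> 's set
    \<Rightarrow> nat \<Rightarrow> ('s \<times> 'a) list \<Rightarrow> 's \<Rightarrow> real" where
  "reach_within P \<sigma> T 0 h s = (if s \<in> T then 1 else 0)"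
| "reach_within P \<sigma> T (Suc n) h s = (if s \<in> T then 1 else
     (\<Sum>\<alpha>\<in>UNIV. \<sigma> h s \<alpha> * (\<Sum>s'\<in>UNIV. P s \<alpha> s' * reach_within P \<sigma> T n (h @ [(s, \<alpha>)]) s')))"

definition reach_prob :: "('s::finite \<Rightarrow> 'a::finite \<Rightarrow> 's \<Rightarrow> real) \<Rightarrow> ('s, 'a) sched \<Rightarrow> 's \<Rightarrow> 's set \<Rightarrow> real" where
  "reach_prob P \<sigma> s T = (SUP n. reach_within P \<sigma> T n [] s)"

datatype comparison = Geq | Gt | NotApprox rat

fun holds_comp :: "comparison \<Rightarrow> real \<Rightarrow> real \<Rightarrow> bool" where
  "holds_comp Geq x y = (x \<ge> y)"
| "holds_comp Gt x y = (x > y)"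
| "holds_comp (NotApprox \<epsilon>) x y = (\<bar>x - y\<bar> > real_of_rat \<epsilon>)"

text \<open>A RelReach instance: n scheduler variables (indexed 0..n-1), m terms (indexed 0..m-1),
  coefficients q i, constant c (= q_{m+1}), states s i, scheduler indices k i, targets T i.\<close>

definition relreach_wf :: "nat \<Rightarrow> nat \<Rightarrow> (nat \<Rightarrow> nat) \<Rightarrow> bool" where
  "relreach_wf n m k \<longleftrightarrow> m \<ge> n \<and> k ` {..<m} = {..<n}"

definition relreach_value :: "('s::finite \<Rightarrow> 'a::finite \<Rightarrow> 's \<Rightarrow> real) \<Rightarrow> nat \<Rightarrow> (nat \<Rightarrow> rat)
    \<Rightarrow> (nat \<Rightarrow> 's) \<Rightarrow> (nat \<Rightarrow> nat) \<Rightarrow> (nat \<Rightarrow> 's set) \<Rightarrow> (nat \<Rightarrow> ('s, 'a) sched) \<Rightarrow> real" where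
  "relreach_value P m q s k T \<sigma>s = (\<Sum>i<m. real_of_rat (q i) * reach_prob P (\<sigma>s (k i)) (s i) (T i))"

definition relreach_general :: "('s::finite \<Rightarrow> 'a::finite \<Rightarrow> 's \<Rightarrow> real) \<Rightarrow> nat \<Rightarrow> nat \<Rightarrow> (nat \<Rightarrow> rat)
    \<Rightarrow> (nat \<Rightarrow> 's) \<Rightarrow> (nat \<Rightarrow> nat) \<Rightarrow> (nat \<Rightarrow> 's set) \<Rightarrow> comparison \<Rightarrow> rat \<Rightarrow> bool" where
  "relreach_general P n m q s k T cmp c \<longleftrightarrow>
     (\<exists>\<sigma>s. (\<forall>j<n. is_sched P (\<sigma>s j)) \<and>
        holds_comp cmp (relreach_value P m q s k T \<sigma>s) (real_of_rat c))"

definition relreach_md :: "('s::finite \<Rightarrow> 'a::finite \<Rightarrow> 's \<Rightarrow> real) \<Rightarrow> nat \<Rightarrow> nat \<Rightarrow> (nat \<Rightarrow> rat)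
    \<Rightarrow> (nat \<Rightarrow> 's) \<Rightarrow> (nat \<Rightarrow> nat) \<Rightarrow> (nat \<Rightarrow> 's set) \<Rightarrow> comparison \<Rightarrow> rat \<Rightarrow> bool" where
  "relreach_md P n m q s k T cmp c \<longleftrightarrow>
     (\<exists>ds. (\<forall>j<n. is_md_sched P (ds j)) \<and>
        holds_comp cmp (relreach_value P m q s k T (\<lambda>j. md_to_sched (ds j))) (real_of_rat c))"

end

theory Submission
  imports Defs
begin


fun V :: "('s::finite \<Rightarrow> 'a::finite \<Rightarrow> 's \<Rightarrow> real) \<Rightarrow> ('s, 'a) sched \<Rightarrow> 's set
    \<Rightarrow> ('s \<Rightarrow> real) \<Rightarrow> ('s \<Rightarrow> real) \<Rightarrow> nat \<Rightarrow> ('s \<times> 'a) list \<Rightarrow> 's \<Rightarrow> real" where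
  "V P \<sigma> G f g 0 h s = (if s \<in> G then f s else g s)"
| "V P \<sigma> G f g (Suc N) h s = (if s \<in> G then f s else
     (\<Sum>\<alpha>\<in>UNIV. \<sigma> h s \<alpha> * (\<Sum>s'\<in>UNIV. P s \<alpha> s' * V P \<sigma> G f g N (h @ [(s, \<alpha>)]) s')))"

definition sched_on :: "('s \<Rightarrow> 'a set) \<Rightarrow> ('s, 'a::finite) sched \<Rightarrow> bool" where
  "sched_on E \<sigma> \<longleftrightarrow> (\<forall>h s \<alpha>. 0 \<le> \<sigma> h s \<alpha> \<and> (\<sigma> h s \<alpha> \<noteq> 0 \<longrightarrow> \<alpha> \<in> E s))
     \<and> (\<forall>h s. (\<Sum>\<alpha>\<in>UNIV. \<sigma> h s \<alpha>) = 1)"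

lemma is_sched_on: "is_sched P \<sigma> = sched_on (enabled P) \<sigma>"
  unfolding is_sched_def sched_on_def by simp

lemma md_sched_on: "sched_on (\<lambda>s. {d s}) (md_to_sched d)"
  unfolding sched_on_def md_to_sched_def by auto

lemma md_is_sched: "is_md_sched P d \<Longrightarrow> is_sched P (md_to_sched d)"
  unfolding is_sched_def md_to_sched_def is_md_sched_def by auto

lemma mdp_nonneg: "is_mdp P \<Longrightarrow> 0 \<le> P s \<alpha> s'"
  unfolding is_mdp_def by auto

lemma enabled_sum: "\<alpha> \<in> enabled P s \<Longrightarrow> (\<Sum>s'\<in>UNIV. P s \<alpha> s') = 1"
  unfolding enabled_def by auto

lemma avg_le:
  assumes "sched_on E \<sigma>" "\<And>\<alpha>. \<alpha> \<in> E s \<Longrightarrow> X \<alpha> \<le> c"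
  shows "(\<Sum>\<alpha>\<in>UNIV. \<sigma> h s \<alpha> * X \<alpha>) \<le> c"
proof -
  have "(\<Sum>\<alpha>\<in>UNIV. \<sigma> h s \<alpha> * X \<alpha>) \<le> (\<Sum>\<alpha>\<in>UNIV. \<sigma> h s \<alpha> * c)"
  proof (rule sum_mono)
    fix \<alpha>
    show "\<sigma> h s \<alpha> * X \<alpha> \<le> \<sigma> h s \<alpha> * c"
      using assms unfolding sched_on_def
      by (cases "\<sigma> h s \<alpha> = 0") (auto intro: mult_left_mono)
  qed
  also have "\<dots> = c" using assms(1) unfolding sched_on_def by (simp add: sum_distrib_right[symmetric])
  finally show ?thesis .
qed

lemma avg_ge:
  assumes "sched_on E \<sigma>" "\<And>\<alpha>. \<alpha> \<in> E s \<Longrightarrow> c \<le> X \<alpha>"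
  shows "c \<le> (\<Sum>\<alpha>\<in>UNIV. \<sigma> h s \<alpha> * X \<alpha>)"
proof -
  have "c = (\<Sum>\<alpha>\<in>UNIV. \<sigma> h s \<alpha> * c)" using assms(1) unfolding sched_on_def by (simp add: sum_distrib_right[symmetric])
  also have "\<dots> \<le> (\<Sum>\<alpha>\<in>UNIV. \<sigma> h s \<alpha> * X \<alpha>)"
  proof (rule sum_mono)
    fix \<alpha>
    show "\<sigma> h s \<alpha> * c \<le> \<sigma> h s \<alpha> * X \<alpha>"
      using assms unfolding sched_on_def
      by (cases "\<sigma> h s \<alpha> = 0") (auto intro: mult_left_mono)
  qed
  finally show ?thesis .
qed

lemma V_add:
  assumes "\<And>x. f x = f1 x + f2 x" "\<And>x. g x = g1 x + g2 x"
  shows "V P \<sigma> G f g N h s = V P \<sigma> G f1 g1 N h s + V P \<sigma> G f2 g2 N h s"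
  by (induction N arbitrary: h s)
     (auto simp: assms sum.distrib distrib_left)

lemma V_scale:
  assumes "\<And>x. f x = c * f1 x" "\<And>x. g x = c * g1 x"
  shows "V P \<sigma> G f g N h s = c * V P \<sigma> G f1 g1 N h s"
  by (induction N arbitrary: h s)
     (auto simp: assms sum_distrib_left algebra_simps)

lemma V_mono:
  assumes "is_mdp P" "sched_on E \<sigma>"
    and "\<And>x. x \<in> G \<Longrightarrow> f1 x \<le> f2 x" "\<And>x. x \<notin> G \<Longrightarrow> g1 x \<le> g2 x"
  shows "V P \<sigma> G f1 g1 N h s \<le> V P \<sigma> G f2 g2 N h s"
proof (induction N arbitrary: h s)
  case 0 then show ?case using assms by auto
next
  case (Suc N)
  have "(\<Sum>\<alpha>\<in>UNIV. \<sigma> h s \<alpha> * (\<Sum>s'\<in>UNIV. P s \<alpha> s' * V P \<sigma> G f1 g1 N (h @ [(s, \<alpha>)]) s'))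
     \<le> (\<Sum>\<alpha>\<in>UNIV. \<sigma> h s \<alpha> * (\<Sum>s'\<in>UNIV. P s \<alpha> s' * V P \<sigma> G f2 g2 N (h @ [(s, \<alpha>)]) s'))"
    apply (rule sum_mono, rule mult_left_mono)
    apply (rule sum_mono, rule mult_left_mono)
    using Suc assms unfolding sched_on_def by (auto simp: mdp_nonneg)
  then show ?case using assms by auto
qed

lemma V_super:
  assumes "is_mdp P" "sched_on E \<sigma>" "\<And>s. E s \<subseteq> enabled P s"
    and "\<And>x. x \<in> G \<Longrightarrow> f x \<le> v x" "\<And>x. x \<notin> G \<Longrightarrow> g x \<le> v x"
    and "\<And>x \<alpha>. x \<notin> G \<Longrightarrow> \<alpha> \<in> E x \<Longrightarrow> (\<Sum>s'\<in>UNIV. P x \<alpha> s' * v s') \<le> v x"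
  shows "V P \<sigma> G f g N h s \<le> v s"
proof (induction N arbitrary: h s)
  case 0 then show ?case using assms by auto
next
  case (Suc N)
  show ?case
  proof (cases "s \<in> G")
    case True then show ?thesis using assms by auto
  next
    case False
    have "(\<Sum>\<alpha>\<in>UNIV. \<sigma> h s \<alpha> * (\<Sum>s'\<in>UNIV. P s \<alpha> s' * V P \<sigma> G f g N (h @ [(s, \<alpha>)]) s')) \<le> v s"
    proof (rule avg_le[OF assms(2)])
      fix \<alpha> assume a: "\<alpha> \<in> E s"
      have "(\<Sum>s'\<in>UNIV. P s \<alpha> s' * V P \<sigma> G f g N (h @ [(s, \<alpha>)]) s') \<le> (\<Sum>s'\<in>UNIV. P s \<alpha> s' * v s')"
        by (rule sum_mono, rule mult_left_mono) (auto simp: Suc mdp_nonneg assms(1))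
      also have "\<dots> \<le> v s" using assms(6)[OF False a] .
      finally show "(\<Sum>s'\<in>UNIV. P s \<alpha> s' * V P \<sigma> G f g N (h @ [(s, \<alpha>)]) s') \<le> v s" .
    qed
    then show ?thesis using False by simp
  qed
qed

lemma V_sub:
  assumes "is_mdp P" "sched_on E \<sigma>" "\<And>s. E s \<subseteq> enabled P s"
    and "\<And>x. x \<in> G \<Longrightarrow> v x \<le> f x" "\<And>x. x \<notin> G \<Longrightarrow> v x \<le> g x"
    and "\<And>x \<alpha>. x \<notin> G \<Longrightarrow> \<alpha> \<in> E x \<Longrightarrow> v x \<le> (\<Sum>s'\<in>UNIV. P x \<alpha> s' * v s')"
  shows "v s \<le> V P \<sigma> G f g N h s"
proof (induction N arbitrary: h s)
  case 0 then show ?case using assms by auto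
next
  case (Suc N)
  show ?case
  proof (cases "s \<in> G")
    case True then show ?thesis using assms by auto
  next
    case False
    have "v s \<le> (\<Sum>\<alpha>\<in>UNIV. \<sigma> h s \<alpha> * (\<Sum>s'\<in>UNIV. P s \<alpha> s' * V P \<sigma> G f g N (h @ [(s, \<alpha>)]) s'))"
    proof (rule avg_ge[OF assms(2)])
      fix \<alpha> assume a: "\<alpha> \<in> E s"
      have "v s \<le> (\<Sum>s'\<in>UNIV. P s \<alpha> s' * v s')" using assms(6)[OF False a] .
      also have "\<dots> \<le> (\<Sum>s'\<in>UNIV. P s \<alpha> s' * V P \<sigma> G f g N (h @ [(s, \<alpha>)]) s')"
        by (rule sum_mono, rule mult_left_mono) (auto simp: Suc mdp_nonneg assms(1))
      finally show "v s \<le> (\<Sum>s'\<in>UNIV. P s \<alpha> s' * V P \<sigma> G f g N (h @ [(s, \<alpha>)]) s')" .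
    qed
    then show ?thesis using False by simp
  qed
qed

lemma const_harm:
  assumes "\<alpha> \<in> enabled P x" shows "(\<Sum>s'\<in>UNIV. P x \<alpha> s' * c) = c"
  using enabled_sum[OF assms] by (simp add: sum_distrib_right[symmetric])

lemma V_bounds:
  assumes "is_mdp P" "sched_on E \<sigma>" "\<And>s. E s \<subseteq> enabled P s"
    and "\<And>x. L \<le> f x \<and> f x \<le> M" "\<And>x. L \<le> g x \<and> g x \<le> M"
  shows "L \<le> V P \<sigma> G f g N h s \<and> V P \<sigma> G f g N h s \<le> M"
proof
  show "L \<le> V P \<sigma> G f g N h s"
    by (rule V_sub[OF assms(1-3), where v="\<lambda>_. L"]) (use assms const_harm[of _ P] in fastforce)+
  show "V P \<sigma> G f g N h s \<le> M"
    by (rule V_super[OF assms(1-3), where v="\<lambda>_. M"]) (use assms const_harm[of _ P] in fastforce)+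
qed

lemma V_incr:
  assumes "is_mdp P" "sched_on E \<sigma>" "\<And>s. E s \<subseteq> enabled P s" "\<And>x. 0 \<le> f x"
  shows "V P \<sigma> G f (\<lambda>_. 0) N h s \<le> V P \<sigma> G f (\<lambda>_. 0) (Suc N) h s"
proof (induction N arbitrary: h s)
  case 0
  have "0 \<le> V P \<sigma> G f (\<lambda>_. 0) (Suc 0) h s"
    using V_bounds[OF assms(1-3), of 0 f "max 0 (Max (range f))" "\<lambda>_. 0"] assms(4)
    by (meson Max_ge finite_UNIV finite_imageI le_max_iff_disj order_refl rangeI)
  then show ?case by auto
next
  case (Suc N)
  have "(\<Sum>\<alpha>\<in>UNIV. \<sigma> h s \<alpha> * (\<Sum>s'\<in>UNIV. P s \<alpha> s' * V P \<sigma> G f (\<lambda>_. 0) N (h @ [(s, \<alpha>)]) s'))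
     \<le> (\<Sum>\<alpha>\<in>UNIV. \<sigma> h s \<alpha> * (\<Sum>s'\<in>UNIV. P s \<alpha> s' * V P \<sigma> G f (\<lambda>_. 0) (Suc N) (h @ [(s, \<alpha>)]) s'))"
    apply (rule sum_mono, rule mult_left_mono)
    apply (rule sum_mono, rule mult_left_mono)
    using Suc assms unfolding sched_on_def by (auto simp: mdp_nonneg)
  then show ?case by (simp del: V.simps(2) add: V.simps(2)[of _ _ _ _ _ N] V.simps(2)[of _ _ _ _ _ "Suc N"])
qed



lemma V_G: "s \<in> G \<Longrightarrow> V P \<sigma> G f g N h s = f s"
  by (cases N) auto

lemma V_mono_conv:
  assumes "is_mdp P" "sched_on E \<sigma>" "\<And>s. E s \<subseteq> enabled P s" "\<And>x. 0 \<le> f x"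
  shows "convergent (\<lambda>N. V P \<sigma> G f (\<lambda>_. 0) N h s)"
proof (rule Bseq_mono_convergent)
  define M where "M = Max (range f)"
  have fM: "f x \<le> M" for x unfolding M_def by simp
  have "0 \<le> V P \<sigma> G f (\<lambda>_. 0) N h s \<and> V P \<sigma> G f (\<lambda>_. 0) N h s \<le> M" for N
    by (rule V_bounds[OF assms(1-3)]) (use assms(4) fM order_trans[OF assms(4) fM] in auto)
  then show "Bseq (\<lambda>N. V P \<sigma> G f (\<lambda>_. 0) N h s)" by (intro BseqI'[of _ M]) auto
  have "incseq (\<lambda>N. V P \<sigma> G f (\<lambda>_. 0) N h s)"
    by (rule incseq_SucI) (rule V_incr[OF assms])
  then show "\<forall>m n. m \<le> n \<longrightarrow> V P \<sigma> G f (\<lambda>_. 0) m h s \<le> V P \<sigma> G f (\<lambda>_. 0) n h s"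
    by (auto simp: incseq_def)
qed

lemma V_conv:
  assumes "is_mdp P" "sched_on E \<sigma>" "\<And>s. E s \<subseteq> enabled P s"
  shows "convergent (\<lambda>N. V P \<sigma> G w (\<lambda>_. 0) N h s)"
proof -
  define wp where "wp = (\<lambda>x. max (w x) 0)"
  define wn where "wn = (\<lambda>x. max (- w x) 0)"
  have eq: "V P \<sigma> G w (\<lambda>_. 0) N h s = V P \<sigma> G wp (\<lambda>_. 0) N h s + (-1) * V P \<sigma> G wn (\<lambda>_. 0) N h s" for N
  proof -
    have "V P \<sigma> G w (\<lambda>_. 0) N h s = V P \<sigma> G wp (\<lambda>_. 0) N h s + V P \<sigma> G (\<lambda>x. (-1) * wn x) (\<lambda>x. (-1) * 0) N h s"
      by (rule V_add) (auto simp: wp_def wn_def)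
    also have "V P \<sigma> G (\<lambda>x. (-1) * wn x) (\<lambda>x. (-1) * 0) N h s = (-1) * V P \<sigma> G wn (\<lambda>_. 0) N h s"
      by (rule V_scale) auto
    finally show ?thesis .
  qed
  have c1: "convergent (\<lambda>N. V P \<sigma> G wp (\<lambda>_. 0) N h s)"
    by (rule V_mono_conv[OF assms]) (auto simp: wp_def)
  have c2: "convergent (\<lambda>N. V P \<sigma> G wn (\<lambda>_. 0) N h s)"
    by (rule V_mono_conv[OF assms]) (auto simp: wn_def)
  have "convergent (\<lambda>N. V P \<sigma> G wp (\<lambda>_. 0) N h s + (-1) * V P \<sigma> G wn (\<lambda>_. 0) N h s)"
  proof (rule convergentI)
    show "(\<lambda>N. V P \<sigma> G wp (\<lambda>_. 0) N h s + (-1) * V P \<sigma> G wn (\<lambda>_. 0) N h s) \<longlonglongrightarrow>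
      lim (\<lambda>N. V P \<sigma> G wp (\<lambda>_. 0) N h s) + (-1) * lim (\<lambda>N. V P \<sigma> G wn (\<lambda>_. 0) N h s)"
      using c1[unfolded convergent_LIMSEQ_iff] c2[unfolded convergent_LIMSEQ_iff]
      by (intro tendsto_add tendsto_mult_left)
  qed
  then show ?thesis unfolding eq .
qed

lemma reach_V: "reach_within P \<sigma> T N h s = V P \<sigma> T (\<lambda>_. 1) (\<lambda>_. 0) N h s"
  by (induction N arbitrary: h s) auto

lemma reach_prob_lim:
  assumes "is_mdp P" "is_sched P \<sigma>"
  shows "(\<lambda>N. V P \<sigma> T (\<lambda>_. 1) (\<lambda>_. 0) N [] s) \<longlonglongrightarrow> reach_prob P \<sigma> s T"
proof -
  have sc: "sched_on (enabled P) \<sigma>" using assms is_sched_on by auto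
  have b: "0 \<le> V P \<sigma> T (\<lambda>_. 1) (\<lambda>_. 0) N [] s \<and> V P \<sigma> T (\<lambda>_. 1) (\<lambda>_. 0) N [] s \<le> 1" for N
    by (rule V_bounds[OF assms(1) sc]) auto
  have "(\<lambda>N. V P \<sigma> T (\<lambda>_. 1) (\<lambda>_. 0) N [] s) \<longlonglongrightarrow> (SUP N. V P \<sigma> T (\<lambda>_. 1) (\<lambda>_. 0) N [] s)"
  proof (rule LIMSEQ_incseq_SUP)
    show "bdd_above (range (\<lambda>N. V P \<sigma> T (\<lambda>_. 1) (\<lambda>_. 0) N [] s))"
      using b by (intro bdd_aboveI[of _ 1]) auto
    show "incseq (\<lambda>N. V P \<sigma> T (\<lambda>_. 1) (\<lambda>_. 0) N [] s)"
      by (rule incseq_SucI) (rule V_incr[OF assms(1) sc], auto)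
  qed
  then show ?thesis unfolding reach_prob_def reach_V .
qed

fun Vd :: "('s::finite \<Rightarrow> 'a::finite \<Rightarrow> 's \<Rightarrow> real) \<Rightarrow> ('s \<Rightarrow> 'a) \<Rightarrow> 's set
    \<Rightarrow> ('s \<Rightarrow> real) \<Rightarrow> ('s \<Rightarrow> real) \<Rightarrow> nat \<Rightarrow> 's \<Rightarrow> real" where
  "Vd P d G f g 0 s = (if s \<in> G then f s else g s)"
| "Vd P d G f g (Suc N) s = (if s \<in> G then f s else
     (\<Sum>s'\<in>UNIV. P s (d s) s' * Vd P d G f g N s'))"

lemma V_md: "V P (md_to_sched d) G f g N h s = Vd P d G f g N s"
proof (induction N arbitrary: h s)
  case 0 then show ?case by simp
next
  case (Suc N)
  have "(\<Sum>\<alpha>\<in>UNIV. md_to_sched d h s \<alpha> * (\<Sum>s'\<in>UNIV. P s \<alpha> s' * V P (md_to_sched d) G f g N (h @ [(s, \<alpha>)]) s'))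
      = (\<Sum>s'\<in>UNIV. P s (d s) s' * Vd P d G f g N s')"
  proof -
    have e: "(\<lambda>\<alpha>. md_to_sched d h s \<alpha> * X \<alpha>) = (\<lambda>\<alpha>. if \<alpha> = d s then X \<alpha> else 0)" for X :: "'b \<Rightarrow> real"
      by (auto simp: md_to_sched_def)
    show ?thesis by (simp only: e sum.delta' Suc) simp
  qed
  then show ?case by simp
qed

definition vd :: "('s::finite \<Rightarrow> 'a::finite \<Rightarrow> 's \<Rightarrow> real) \<Rightarrow> 's set \<Rightarrow> ('s \<Rightarrow> real) \<Rightarrow> ('s \<Rightarrow> 'a) \<Rightarrow> 's \<Rightarrow> real" where
  "vd P G w d s = lim (\<lambda>N. Vd P d G w (\<lambda>_. 0) N s)"

lemma md_on_enabled: "is_md_sched P d \<Longrightarrow> {d s} \<subseteq> enabled P s"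
  unfolding is_md_sched_def by auto

lemma vd_lim:
  assumes "is_mdp P" "is_md_sched P d"
  shows "(\<lambda>N. Vd P d G w (\<lambda>_. 0) N s) \<longlonglongrightarrow> vd P G w d s"
proof -
  have "convergent (\<lambda>N. V P (md_to_sched d) G w (\<lambda>_. 0) N [] s)"
    by (rule V_conv[OF assms(1) md_sched_on md_on_enabled[OF assms(2)]])
  then show ?thesis unfolding vd_def V_md convergent_LIMSEQ_iff .
qed

lemma vd_G: "s \<in> G \<Longrightarrow> vd P G w d s = w s"
proof -
  assume "s \<in> G"
  then have "(\<lambda>N. Vd P d G w (\<lambda>_. 0) N s) = (\<lambda>N. w s)" by (intro ext, case_tac N) auto
  then show ?thesis unfolding vd_def by simp
qed

lemma vd_fix:
  assumes "is_mdp P" "is_md_sched P d" "s \<notin> G"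
  shows "vd P G w d s = (\<Sum>s'\<in>UNIV. P s (d s) s' * vd P G w d s')"
proof -
  have "(\<lambda>N. Vd P d G w (\<lambda>_. 0) (Suc N) s) \<longlonglongrightarrow> vd P G w d s"
    using LIMSEQ_Suc[OF vd_lim[OF assms(1,2)]] .
  moreover have "(\<lambda>N. Vd P d G w (\<lambda>_. 0) (Suc N) s) \<longlonglongrightarrow> (\<Sum>s'\<in>UNIV. P s (d s) s' * vd P G w d s')"
    using assms(3) by (simp, intro tendsto_sum tendsto_mult_left vd_lim[OF assms(1,2)])
  ultimately show ?thesis by (rule LIMSEQ_unique)
qed

lemma vd_closed:
  assumes "is_mdp P" "is_md_sched P d" "\<And>t. t \<in> B \<Longrightarrow> t \<notin> G \<and> (\<forall>s'. P t (d t) s' \<noteq> 0 \<longrightarrow> s' \<in> B)"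
    and "t \<in> B"
  shows "vd P G w d t = 0"
proof -
  have "\<forall>t\<in>B. Vd P d G w (\<lambda>_. 0) N t = 0" for N
  proof (induction N)
    case 0 then show ?case using assms(3) by auto
  next
    case (Suc N)
    show ?case
    proof
      fix t assume t: "t \<in> B"
      have "P t (d t) s' * Vd P d G w (\<lambda>_. 0) N s' = 0" for s'
        using Suc assms(3)[OF t] by (cases "P t (d t) s' = 0") auto
      then have "(\<Sum>s'\<in>UNIV. P t (d t) s' * Vd P d G w (\<lambda>_. 0) N s') = 0"
        by (intro sum.neutral) auto
      then show "Vd P d G w (\<lambda>_. 0) (Suc N) t = 0" using assms(3)[OF t] by simp
    qed
  qed
  then have "(\<lambda>N. Vd P d G w (\<lambda>_. 0) N t) = (\<lambda>N. 0)" using assms(4) by auto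
  then show ?thesis unfolding vd_def by simp
qed



fun Att :: "('s::finite \<Rightarrow> 'a::finite \<Rightarrow> 's \<Rightarrow> real) \<Rightarrow> ('s \<Rightarrow> 'a set) \<Rightarrow> 's set \<Rightarrow> nat \<Rightarrow> 's set" where
  "Att P E G 0 = G"
| "Att P E G (Suc i) = Att P E G i \<union> {s. \<forall>\<alpha>\<in>E s. \<exists>s'. P s \<alpha> s' \<noteq> 0 \<and> s' \<in> Att P E G i}"

lemma Att_mono: "i \<le> j \<Longrightarrow> Att P E G i \<subseteq> Att P E G j"
  by (rule lift_Suc_mono_le[of "Att P E G"]) auto

definition Cset :: "('s::finite \<Rightarrow> 'a::finite \<Rightarrow> 's \<Rightarrow> real) \<Rightarrow> ('s \<Rightarrow> 'a set) \<Rightarrow> 's set \<Rightarrow> 's set" where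
  "Cset P E G = - (\<Union>i. Att P E G i)"

lemma Att_K: "\<exists>K. \<forall>s. s \<notin> Cset P E G \<longrightarrow> s \<in> Att P E G K"
proof -
  define f where "f s = (SOME i. s \<in> Att P E G i)" for s
  define K where "K = (\<Sum>s\<in>UNIV. f s)"
  have "s \<in> Att P E G K" if "s \<notin> Cset P E G" for s
  proof -
    have "\<exists>i. s \<in> Att P E G i" using that unfolding Cset_def by auto
    then have "s \<in> Att P E G (f s)" unfolding f_def by (rule someI_ex)
    moreover have "f s \<le> K" unfolding K_def by (rule member_le_sum) auto
    ultimately show ?thesis using Att_mono by blast
  qed
  then show ?thesis by blast
qed

lemma Cset_closed:
  assumes "s \<in> Cset P E G"
  shows "s \<notin> G \<and> (\<exists>\<alpha>\<in>E s. \<forall>s'. P s \<alpha> s' \<noteq> 0 \<longrightarrow> s' \<in> Cset P E G)"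
proof
  show "s \<notin> G" using assms unfolding Cset_def by (auto dest: spec[of _ 0])
  obtain K where K: "\<forall>s. s \<notin> Cset P E G \<longrightarrow> s \<in> Att P E G K" using Att_K by blast
  show "\<exists>\<alpha>\<in>E s. \<forall>s'. P s \<alpha> s' \<noteq> 0 \<longrightarrow> s' \<in> Cset P E G"
  proof (rule ccontr)
    assume "\<not> ?thesis"
    then have "\<forall>\<alpha>\<in>E s. \<exists>s'. P s \<alpha> s' \<noteq> 0 \<and> s' \<in> Att P E G K" using K by blast
    then have "s \<in> Att P E G (Suc K)" by simp
    then show False using assms unfolding Cset_def by blast
  qed
qed

lemma pm_exists:
  assumes "is_mdp P"
  shows "\<exists>pm. 0 < pm \<and> pm \<le> 1 \<and> (\<forall>s \<alpha> s'. P s \<alpha> s' \<noteq> 0 \<longrightarrow> pm \<le> P s \<alpha> s')"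
proof -
  define A where "A = insert 1 ((\<lambda>(s, \<alpha>, s'). P s \<alpha> s') ` {x. (\<lambda>(s, \<alpha>, s'). P s \<alpha> s') x \<noteq> 0})"
  have fin: "finite A" unfolding A_def by simp
  have pos: "\<forall>x\<in>A. 0 < x" unfolding A_def using mdp_nonneg[OF assms]
    by (auto simp: less_le)
  define pm where "pm = Min A"
  have "pm \<in> A" unfolding pm_def using fin by (intro Min_in) (auto simp: A_def)
  then have "0 < pm" using pos by auto
  moreover have "pm \<le> 1" unfolding pm_def using fin by (auto simp: A_def)
  moreover have "pm \<le> P s \<alpha> s'" if "P s \<alpha> s' \<noteq> 0" for s \<alpha> s'
  proof -
    have "P s \<alpha> s' \<in> A" unfolding A_def using that by (auto intro!: image_eqI[of _ _ "(s, \<alpha>, s')"])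
    then show ?thesis unfolding pm_def using fin by auto
  qed
  ultimately show ?thesis by blast
qed

lemma Att_prob:
  assumes "is_mdp P" "sched_on E \<sigma>" "\<And>s. E s \<subseteq> enabled P s"
    and pm: "0 < pm" "pm \<le> 1" "\<And>s \<alpha> s'. P s \<alpha> s' \<noteq> 0 \<Longrightarrow> pm \<le> P s \<alpha> s'"
  shows "s \<in> Att P E G i \<Longrightarrow> pm ^ i \<le> V P \<sigma> G (\<lambda>_. 1) (\<lambda>_. 0) i h s"
proof (induction i arbitrary: h s)
  case 0 then show ?case by simp
next
  case (Suc i)
  have nn: "0 \<le> V P \<sigma> G (\<lambda>_. 1) (\<lambda>_. 0) N h' t" for N h' t
    using V_bounds[OF assms(1-3), of 0 "\<lambda>_. 1" 1 "\<lambda>_. 0"] by auto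
  have pmi: "pm ^ Suc i \<le> pm ^ i" using pm by (simp add: mult_left_le_one_le)
  show ?case
  proof (cases "s \<in> G")
    case True
    have "pm ^ Suc i \<le> 1" by (rule power_le_one) (use pm in auto)
    then show ?thesis using True by (simp only: V_G)
  next
    case nG: False
    show ?thesis
    proof (cases "s \<in> Att P E G i")
      case True
      then show ?thesis using Suc.IH[of s h] V_incr[OF assms(1-3), of "\<lambda>_. 1" G i h s] pmi by simp
    next
      case False
      then have all: "\<forall>\<alpha>\<in>E s. \<exists>s'. P s \<alpha> s' \<noteq> 0 \<and> s' \<in> Att P E G i" using Suc.prems by simp
      have "pm ^ Suc i \<le> (\<Sum>\<alpha>\<in>UNIV. \<sigma> h s \<alpha> * (\<Sum>s'\<in>UNIV. P s \<alpha> s' * V P \<sigma> G (\<lambda>_. 1) (\<lambda>_. 0) i (h @ [(s, \<alpha>)]) s'))"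
      proof (rule avg_ge[OF assms(2)])
        fix \<alpha> assume "\<alpha> \<in> E s"
        then obtain s' where s': "P s \<alpha> s' \<noteq> 0" "s' \<in> Att P E G i" using all by blast
        have "pm ^ Suc i = pm * pm ^ i" by simp
        also have "\<dots> \<le> P s \<alpha> s' * V P \<sigma> G (\<lambda>_. 1) (\<lambda>_. 0) i (h @ [(s, \<alpha>)]) s'"
          using pm(3)[OF s'(1)] Suc.IH[OF s'(2)] pm by (intro mult_mono) auto
        also have "\<dots> \<le> (\<Sum>s''\<in>UNIV. P s \<alpha> s'' * V P \<sigma> G (\<lambda>_. 1) (\<lambda>_. 0) i (h @ [(s, \<alpha>)]) s'')"
          by (rule member_le_sum) (auto intro: mult_nonneg_nonneg mdp_nonneg[OF assms(1)] nn)
        finally show "pm ^ Suc i \<le> (\<Sum>s''\<in>UNIV. P s \<alpha> s'' * V P \<sigma> G (\<lambda>_. 1) (\<lambda>_. 0) i (h @ [(s, \<alpha>)]) s'')" .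
      qed
      then show ?thesis using nG by simp
    qed
  qed
qed

definition Qind :: "('s::finite \<Rightarrow> 'a::finite \<Rightarrow> 's \<Rightarrow> real) \<Rightarrow> ('s \<Rightarrow> 'a set) \<Rightarrow> 's set \<Rightarrow> 's \<Rightarrow> real" where
  "Qind P E G x = (if x \<in> Cset P E G then 0 else 1)"

lemma tail_ineq:
  assumes "is_mdp P" "sched_on E \<sigma>" "\<And>s. E s \<subseteq> enabled P s"
    and pm: "0 < pm" "pm \<le> 1" "\<And>s \<alpha> s'. P s \<alpha> s' \<noteq> 0 \<Longrightarrow> pm \<le> P s \<alpha> s'"
    and K: "\<forall>s. s \<notin> Cset P E G \<longrightarrow> s \<in> Att P E G K"
  shows "pm ^ K * V P \<sigma> G (\<lambda>_. 0) (Qind P E G) N h s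
     \<le> V P \<sigma> G (\<lambda>_. 1) (\<lambda>_. 0) (N + K) h s - V P \<sigma> G (\<lambda>_. 1) (\<lambda>_. 0) N h s"
proof (induction N arbitrary: h s)
  case 0
  have nn: "0 \<le> V P \<sigma> G (\<lambda>_. 1) (\<lambda>_. 0) N h' t" for N h' t
    using V_bounds[OF assms(1-3), of 0 "\<lambda>_. 1" 1 "\<lambda>_. 0"] by auto
  show ?case
  proof (cases "s \<in> G")
    case True then show ?thesis by (simp add: V_G)
  next
    case False
    show ?thesis
    proof (cases "s \<in> Cset P E G")
      case True then show ?thesis using False nn by (simp add: Qind_def)
    next
      case C: False
      then show ?thesis using False Att_prob[OF assms(1-3) pm, of s G K h] K by (simp add: Qind_def)
    qed
  qed
next
  case (Suc N)
  show ?case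
  proof (cases "s \<in> G")
    case True then show ?thesis by (simp add: V_G)
  next
    case False
    let ?Q = "V P \<sigma> G (\<lambda>_. 0) (Qind P E G) N"
    let ?A = "\<lambda>M. V P \<sigma> G (\<lambda>_. 1) (\<lambda>_. 0) M"
    have "pm ^ K * (\<Sum>\<alpha>\<in>UNIV. \<sigma> h s \<alpha> * (\<Sum>s'\<in>UNIV. P s \<alpha> s' * ?Q (h @ [(s, \<alpha>)]) s'))
       = (\<Sum>\<alpha>\<in>UNIV. \<sigma> h s \<alpha> * (\<Sum>s'\<in>UNIV. P s \<alpha> s' * (pm ^ K * ?Q (h @ [(s, \<alpha>)]) s')))"
      by (simp add: sum_distrib_left mult.left_commute)
    also have "\<dots> \<le> (\<Sum>\<alpha>\<in>UNIV. \<sigma> h s \<alpha> * (\<Sum>s'\<in>UNIV. P s \<alpha> s' * (?A (N + K) (h @ [(s, \<alpha>)]) s' - ?A N (h @ [(s, \<alpha>)]) s')))"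
      apply (rule sum_mono, rule mult_left_mono)
      apply (rule sum_mono, rule mult_left_mono)
      using Suc.IH assms(2) unfolding sched_on_def by (auto simp: mdp_nonneg[OF assms(1)])
    also have "\<dots> = (\<Sum>\<alpha>\<in>UNIV. \<sigma> h s \<alpha> * (\<Sum>s'\<in>UNIV. P s \<alpha> s' * ?A (N + K) (h @ [(s, \<alpha>)]) s'))
       - (\<Sum>\<alpha>\<in>UNIV. \<sigma> h s \<alpha> * (\<Sum>s'\<in>UNIV. P s \<alpha> s' * ?A N (h @ [(s, \<alpha>)]) s'))"
      by (simp only: right_diff_distrib sum_subtractf)
    finally show ?thesis using False by simp
  qed
qed

lemma tail_lim:
  assumes "is_mdp P" "sched_on E \<sigma>" "\<And>s. E s \<subseteq> enabled P s"
  shows "(\<lambda>N. V P \<sigma> G (\<lambda>_. 0) (Qind P E G) N h s) \<longlonglongrightarrow> 0"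
proof -
  obtain pm where pm: "0 < pm" "pm \<le> 1" "\<And>s \<alpha> s'. P s \<alpha> s' \<noteq> 0 \<Longrightarrow> pm \<le> P s \<alpha> s'"
    using pm_exists[OF assms(1)] by blast
  obtain K where K: "\<forall>s. s \<notin> Cset P E G \<longrightarrow> s \<in> Att P E G K" using Att_K by blast
  let ?A = "\<lambda>M. V P \<sigma> G (\<lambda>_. 1) (\<lambda>_. 0) M h s"
  let ?Q = "\<lambda>N. V P \<sigma> G (\<lambda>_. 0) (Qind P E G) N h s"
  have p: "0 < pm ^ K" using pm by simp
  obtain a where a: "?A \<longlonglongrightarrow> a" using V_conv[OF assms, of G "\<lambda>_. 1" h s] unfolding convergent_def by blast
  have "(\<lambda>N. (?A (N + K) - ?A N) / pm ^ K) \<longlonglongrightarrow> (a - a) / pm ^ K"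
  proof (rule tendsto_divide)
    show "(\<lambda>N. ?A (N + K) - ?A N) \<longlonglongrightarrow> a - a"
      by (rule tendsto_diff[OF LIMSEQ_ignore_initial_segment[OF a] a])
  qed (rule tendsto_const, metis p less_irrefl)
  then have up: "(\<lambda>N. (?A (N + K) - ?A N) / pm ^ K) \<longlonglongrightarrow> 0" by simp
  show ?thesis
  proof (rule real_tendsto_sandwich[OF _ _ tendsto_const up])
    show "\<forall>\<^sub>F N in sequentially. 0 \<le> ?Q N"
      using V_bounds[OF assms(1-3), of 0 "\<lambda>_. 0" 1 "Qind P E G"] by (simp add: Qind_def)
    show "\<forall>\<^sub>F N in sequentially. ?Q N \<le> (?A (N + K) - ?A N) / pm ^ K"
    proof (rule always_eventually, rule allI)
      fix N
      have "pm ^ K * ?Q N \<le> ?A (N + K) - ?A N" by (rule tail_ineq[OF assms pm K])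
      then show "?Q N \<le> (?A (N + K) - ?A N) / pm ^ K" using p by (simp add: le_divide_eq mult.commute)
    qed
  qed
qed



lemma dominate:
  assumes "is_mdp P" "sched_on E \<sigma>" "\<And>s. E s \<subseteq> enabled P s"
    and vG: "\<And>x. x \<in> G \<Longrightarrow> v x = w x"
    and exc: "\<And>x \<alpha>. x \<notin> G \<Longrightarrow> \<alpha> \<in> E x \<Longrightarrow> (\<Sum>s'\<in>UNIV. P x \<alpha> s' * v s') \<le> v x"
    and nn: "\<And>x. x \<in> Cset P E G \<Longrightarrow> 0 \<le> v x"
  shows "lim (\<lambda>N. V P \<sigma> G w (\<lambda>_. 0) N h s) \<le> v s"
proof -
  define M where "M = (\<Sum>x\<in>UNIV. \<bar>v x\<bar>)"
  have vM: "\<bar>v x\<bar> \<le> M" for x unfolding M_def by (rule member_le_sum) auto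
  have M0: "0 \<le> M" using vM[of s] by linarith
  have bound: "V P \<sigma> G w (\<lambda>_. 0) N h s \<le> v s + M * V P \<sigma> G (\<lambda>_. 0) (Qind P E G) N h s" for N
  proof -
    have "V P \<sigma> G w (\<lambda>_. 0) N h s \<le> V P \<sigma> G w (\<lambda>x. v x + M * Qind P E G x) N h s"
    proof (rule V_mono[OF assms(1,2)])
      fix x assume "x \<notin> G"
      show "0 \<le> v x + M * Qind P E G x"
        using nn[of x] vM[of x] M0 by (cases "x \<in> Cset P E G") (auto simp: Qind_def)
    qed simp
    also have "\<dots> = V P \<sigma> G w v N h s + V P \<sigma> G (\<lambda>_. 0) (\<lambda>x. M * Qind P E G x) N h s"
      by (rule V_add) auto
    also have "V P \<sigma> G (\<lambda>_. 0) (\<lambda>x. M * Qind P E G x) N h s = M * V P \<sigma> G (\<lambda>_. 0) (Qind P E G) N h s"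
      by (rule V_scale) auto
    also have "V P \<sigma> G w v N h s \<le> v s"
      by (rule V_super[OF assms(1-3)]) (use vG exc in auto)
    finally show ?thesis by simp
  qed
  have c: "(\<lambda>N. V P \<sigma> G w (\<lambda>_. 0) N h s) \<longlonglongrightarrow> lim (\<lambda>N. V P \<sigma> G w (\<lambda>_. 0) N h s)"
    using V_conv[OF assms(1-3)] convergent_LIMSEQ_iff by blast
  have t: "(\<lambda>N. v s + M * V P \<sigma> G (\<lambda>_. 0) (Qind P E G) N h s) \<longlonglongrightarrow> v s + M * 0"
    by (rule tendsto_add[OF tendsto_const tendsto_mult_left[OF tail_lim[OF assms(1-3)]]])
  show ?thesis using LIMSEQ_le[OF c t] bound by auto
qed

lemma sum_P_const:
  assumes "is_mdp P" "\<alpha> \<in> enabled P x"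
    and "\<And>s'. P x \<alpha> s' \<noteq> 0 \<Longrightarrow> u s' \<le> m"
  shows "(\<Sum>s'\<in>UNIV. P x \<alpha> s' * u s') \<le> m"
proof -
  have "(\<Sum>s'\<in>UNIV. P x \<alpha> s' * u s') \<le> (\<Sum>s'\<in>UNIV. P x \<alpha> s' * m)"
    by (rule sum_mono) (use assms(3) mdp_nonneg[OF assms(1)] in \<open>metis mult_eq_0_iff mult_left_mono order_refl\<close>)
  also have "\<dots> = m" by (rule const_harm[OF assms(2)])
  finally show ?thesis .
qed

lemma sum_P_const_ge:
  assumes "is_mdp P" "\<alpha> \<in> enabled P x"
    and "\<And>s'. P x \<alpha> s' \<noteq> 0 \<Longrightarrow> m \<le> u s'"
  shows "m \<le> (\<Sum>s'\<in>UNIV. P x \<alpha> s' * u s')"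
proof -
  have "m = (\<Sum>s'\<in>UNIV. P x \<alpha> s' * m)" by (rule const_harm[OF assms(2), symmetric])
  also have "\<dots> \<le> (\<Sum>s'\<in>UNIV. P x \<alpha> s' * u s')"
    by (rule sum_mono) (use assms(3) mdp_nonneg[OF assms(1)] in \<open>metis mult_eq_0_iff mult_left_mono order_refl\<close>)
  finally show ?thesis .
qed

lemma sum_P_eq:
  assumes "is_mdp P" "\<alpha> \<in> enabled P x"
    and "\<And>s'. P x \<alpha> s' \<noteq> 0 \<Longrightarrow> u s' \<le> m" "m \<le> (\<Sum>s'\<in>UNIV. P x \<alpha> s' * u s')"
    and "P x \<alpha> s' \<noteq> 0"
  shows "u s' = m"
proof -
  have "(\<Sum>s'\<in>UNIV. P x \<alpha> s' * (m - u s')) = (\<Sum>s'\<in>UNIV. P x \<alpha> s' * m) - (\<Sum>s'\<in>UNIV. P x \<alpha> s' * u s')"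
    by (simp only: right_diff_distrib sum_subtractf)
  also have "\<dots> = m - (\<Sum>s'\<in>UNIV. P x \<alpha> s' * u s')" using const_harm[OF assms(2)] by simp
  finally have z: "(\<Sum>s'\<in>UNIV. P x \<alpha> s' * (m - u s')) \<le> 0" using assms(4) by simp
  have nn: "\<forall>t\<in>UNIV. 0 \<le> P x \<alpha> t * (m - u t)"
    using assms(3) mdp_nonneg[OF assms(1)] by (metis diff_ge_0_iff_ge mult_eq_0_iff mult_nonneg_nonneg order_refl UNIV_I)
  have "(\<Sum>s'\<in>UNIV. P x \<alpha> s' * (m - u s')) = 0" proof -
    have "0 \<le> (\<Sum>s'\<in>UNIV. P x \<alpha> s' * (m - u s'))" by (rule sum_nonneg) (use nn in auto)
    then show ?thesis using z by linarith
  qed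
  then have "P x \<alpha> s' * (m - u s') = 0" using nn by (simp add: sum_nonneg_eq_0_iff)
  then show ?thesis using assms(5) by simp
qed

lemma improve:
  assumes mdp: "is_mdp P" and d: "is_md_sched P d" and d': "is_md_sched P d'"
    and H1: "\<And>x. x \<notin> G \<Longrightarrow> vd P G w d x \<le> (\<Sum>s'\<in>UNIV. P x (d' x) s' * vd P G w d s')"
    and H2: "\<And>x. x \<notin> G \<Longrightarrow> d' x \<noteq> d x \<Longrightarrow>
        vd P G w d x < (\<Sum>s'\<in>UNIV. P x (d' x) s' * vd P G w d s') \<or> vd P G w d x \<le> 0"
  shows "vd P G w d s \<le> vd P G w d' s"
proof -
  let ?u = "vd P G w d"
  let ?E = "\<lambda>x. {d' x}"
  let ?C = "Cset P ?E G"
  have en: "\<And>x. d' x \<in> enabled P x" "\<And>x. d x \<in> enabled P x" using d d' unfolding is_md_sched_def by auto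
  have Cc: "\<And>t s'. t \<in> ?C \<Longrightarrow> t \<notin> G \<and> (P t (d' t) s' \<noteq> 0 \<longrightarrow> s' \<in> ?C)"
    using Cset_closed[of _ P ?E G] by auto
  have neg: "?u t \<le> 0" if "t \<in> ?C" for t
  proof (rule ccontr)
    assume pos: "\<not> ?u t \<le> 0"
    define m where "m = Max (?u ` ?C)"
    define Mx where "Mx = {t\<in>?C. ?u t = m}"
    have um: "?u x \<le> m" if "x \<in> ?C" for x unfolding m_def using that by simp
    have mt: "?u t \<le> m" using um[OF that] .
    have "m \<in> ?u ` ?C" unfolding m_def using that by (intro Max_in) auto
    then obtain t1 where t1: "t1 \<in> Mx" unfolding Mx_def by auto
    have cl: "x \<notin> G \<and> (\<forall>s'. P x (d x) s' \<noteq> 0 \<longrightarrow> s' \<in> Mx)" if x: "x \<in> Mx" for x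
    proof -
      have xC: "x \<in> ?C" and ux: "?u x = m" using x unfolding Mx_def by auto
      have xG: "x \<notin> G" using Cc[OF xC] by blast
      have le: "(\<Sum>s'\<in>UNIV. P x (d' x) s' * ?u s') \<le> m"
        by (rule sum_P_const[OF mdp en(1)]) (use Cc[OF xC] um in blast)
      have ge: "m \<le> (\<Sum>s'\<in>UNIV. P x (d' x) s' * ?u s')" using H1[OF xG] ux by simp
      have dd: "d' x = d x"
      proof (rule ccontr)
        assume "d' x \<noteq> d x"
        from H2[OF xG this] show False using le ux mt pos by linarith
      qed
      have "s' \<in> Mx" if "P x (d x) s' \<noteq> 0" for s'
      proof -
        have "s' \<in> ?C" using Cc[OF xC] that dd by auto
        moreover have "?u s' = m"
          by (rule sum_P_eq[OF mdp en(1) _ ge]) (use Cc[OF xC] um that dd in auto)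
        ultimately show ?thesis unfolding Mx_def by auto
      qed
      then show ?thesis using xG by blast
    qed
    have "?u t1 = 0" by (rule vd_closed[OF mdp d cl t1]) auto
    then show False using t1 mt pos unfolding Mx_def by auto
  qed
  define M where "M = (\<Sum>x\<in>UNIV. \<bar>?u x\<bar>)"
  have uM: "\<bar>?u x\<bar> \<le> M" for x unfolding M_def by (rule member_le_sum) auto
  have sc: "sched_on ?E (md_to_sched d')" by (rule md_sched_on)
  have Een: "\<And>x. ?E x \<subseteq> enabled P x" using en by auto
  have bound: "?u s \<le> Vd P d' G w (\<lambda>_. 0) N s + M * V P (md_to_sched d') G (\<lambda>_. 0) (Qind P ?E G) N [] s" for N
  proof -
    have "?u s \<le> V P (md_to_sched d') G w ?u N [] s"
      by (rule V_sub[OF mdp sc Een]) (use H1 vd_G[of _ G P w d] in auto)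
    also have "\<dots> \<le> V P (md_to_sched d') G w (\<lambda>x. 0 + M * Qind P ?E G x) N [] s"
    proof (rule V_mono[OF mdp sc])
      fix x assume "x \<notin> G"
      show "?u x \<le> 0 + M * Qind P ?E G x"
        using neg[of x] uM[of x] by (cases "x \<in> ?C") (auto simp: Qind_def)
    qed simp
    also have "\<dots> = V P (md_to_sched d') G w (\<lambda>_. 0) N [] s + V P (md_to_sched d') G (\<lambda>_. 0) (\<lambda>x. M * Qind P ?E G x) N [] s"
      by (rule V_add) auto
    also have "V P (md_to_sched d') G (\<lambda>_. 0) (\<lambda>x. M * Qind P ?E G x) N [] s = M * V P (md_to_sched d') G (\<lambda>_. 0) (Qind P ?E G) N [] s"
      by (rule V_scale) auto
    finally show ?thesis by (simp add: V_md)
  qed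
  have t: "(\<lambda>N. Vd P d' G w (\<lambda>_. 0) N s + M * V P (md_to_sched d') G (\<lambda>_. 0) (Qind P ?E G) N [] s)
      \<longlonglongrightarrow> vd P G w d' s + M * 0"
    by (rule tendsto_add[OF vd_lim[OF mdp d'] tendsto_mult_left[OF tail_lim[OF mdp sc Een]]])
  show ?thesis using LIMSEQ_le_const[OF t] bound by auto
qed



lemma opt_exists:
  assumes mdp: "is_mdp P"
  shows "\<exists>d. is_md_sched P d
    \<and> (\<forall>x \<alpha>. x \<notin> G \<longrightarrow> \<alpha> \<in> enabled P x \<longrightarrow> (\<Sum>s'\<in>UNIV. P x \<alpha> s' * vd P G w d s') \<le> vd P G w d x)
    \<and> (\<forall>x\<in>Cset P (enabled P) G. 0 \<le> vd P G w d x)"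
proof -
  define D where "D = {d. is_md_sched P d}"
  define \<Phi> where "\<Phi> d = (\<Sum>x\<in>UNIV. vd P G w d x)" for d
  have finD: "finite D" by simp
  have "(\<lambda>s. SOME \<alpha>. \<alpha> \<in> enabled P s) \<in> D"
    using mdp unfolding D_def is_md_sched_def is_mdp_def by (simp add: some_in_eq)
  then have neD: "D \<noteq> {}" by auto
  define mx where "mx = Max (\<Phi> ` D)"
  have "mx \<in> \<Phi> ` D" unfolding mx_def using finD neD by (intro Max_in) auto
  then obtain d where dD: "d \<in> D" and dmax: "\<Phi> d = mx" by auto
  have maxi: "\<Phi> d' \<le> \<Phi> d" if "d' \<in> D" for d' unfolding dmax mx_def using finD that by simp
  have md: "is_md_sched P d" using dD unfolding D_def by simp
  have en: "d x \<in> enabled P x" for x using md unfolding is_md_sched_def by simp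
  let ?v = "vd P G w d"
  have noimp: False if d': "is_md_sched P d'" and le: "\<And>x. ?v x \<le> vd P G w d' x"
      and lt: "?v x0 < vd P G w d' x0" for d' x0
  proof -
    have "\<Phi> d < \<Phi> d'" unfolding \<Phi>_def by (rule sum_strict_mono_ex1) (use le lt in auto)
    moreover have "\<Phi> d' \<le> \<Phi> d" using maxi d' unfolding D_def by simp
    ultimately show False by simp
  qed
  have E2: "(\<Sum>s'\<in>UNIV. P x \<alpha> s' * ?v s') \<le> ?v x" if x: "x \<notin> G" and a: "\<alpha> \<in> enabled P x" for x \<alpha>
  proof (rule ccontr)
    assume strict: "\<not> ?thesis"
    define d' where "d' = d(x := \<alpha>)"
    have md': "is_md_sched P d'" using md a unfolding d'_def is_md_sched_def by auto
    have fixd: "?v y = (\<Sum>s'\<in>UNIV. P y (d y) s' * ?v s')" if "y \<notin> G" for y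
      by (rule vd_fix[OF mdp md that])
    have le: "?v y \<le> vd P G w d' y" for y
    proof (rule improve[OF mdp md md'])
      fix z assume "z \<notin> G"
      then show "?v z \<le> (\<Sum>s'\<in>UNIV. P z (d' z) s' * ?v s')"
        using fixd[of z] strict unfolding d'_def by (cases "z = x") auto
    next
      fix z assume "z \<notin> G" "d' z \<noteq> d z"
      then show "?v z < (\<Sum>s'\<in>UNIV. P z (d' z) s' * ?v s') \<or> ?v z \<le> 0"
        using strict unfolding d'_def by (cases "z = x") auto
    qed
    have "?v x < (\<Sum>s'\<in>UNIV. P x \<alpha> s' * ?v s')" using strict by simp
    also have "\<dots> \<le> (\<Sum>s'\<in>UNIV. P x \<alpha> s' * vd P G w d' s')"
      by (rule sum_mono, rule mult_left_mono) (use le mdp_nonneg[OF mdp] in auto)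
    also have "\<dots> = vd P G w d' x" using vd_fix[OF mdp md' x] unfolding d'_def by simp
    finally show False using noimp[OF md' le] by blast
  qed
  let ?C = "Cset P (enabled P) G"
  have E0: "0 \<le> ?v t0" if t0: "t0 \<in> ?C" for t0
  proof (rule ccontr)
    assume negt: "\<not> 0 \<le> ?v t0"
    define m where "m = Min (?v ` ?C)"
    define Mn where "Mn = {t\<in>?C. ?v t = m}"
    have um: "m \<le> ?v x" if "x \<in> ?C" for x unfolding m_def using that by simp
    have mneg: "m < 0" using um[OF t0] negt by simp
    have "m \<in> ?v ` ?C" unfolding m_def using t0 by (intro Min_in) auto
    then obtain t1 where t1: "t1 \<in> Mn" unfolding Mn_def by auto
    define st where "st t = (SOME \<alpha>. \<alpha> \<in> enabled P t \<and> (\<forall>s'. P t \<alpha> s' \<noteq> 0 \<longrightarrow> s' \<in> ?C))" for t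
    have stp: "st t \<in> enabled P t \<and> (\<forall>s'. P t (st t) s' \<noteq> 0 \<longrightarrow> s' \<in> ?C)" and tG: "t \<notin> G" if "t \<in> ?C" for t
    proof -
      have "t \<notin> G \<and> (\<exists>\<alpha>\<in>enabled P t. \<forall>s'. P t \<alpha> s' \<noteq> 0 \<longrightarrow> s' \<in> ?C)" by (rule Cset_closed[OF that])
      then obtain \<alpha> where "\<alpha> \<in> enabled P t \<and> (\<forall>s'. P t \<alpha> s' \<noteq> 0 \<longrightarrow> s' \<in> ?C)" by blast
      then show "st t \<in> enabled P t \<and> (\<forall>s'. P t (st t) s' \<noteq> 0 \<longrightarrow> s' \<in> ?C)"
        unfolding st_def by (rule someI)
      show "t \<notin> G" using Cset_closed[OF that] by blast
    qed
    define d' where "d' t = (if t \<in> Mn then st t else d t)" for t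
    have md': "is_md_sched P d'" using en stp unfolding d'_def is_md_sched_def Mn_def by auto
    have geM: "m \<le> (\<Sum>s'\<in>UNIV. P t (d' t) s' * ?v s')" if "t \<in> Mn" for t
    proof -
      have tC: "t \<in> ?C" using that unfolding Mn_def by auto
      show ?thesis unfolding d'_def using that
        by (simp, intro sum_P_const_ge[OF mdp]) (use stp[OF tC] um in auto)
    qed
    have cl: "x \<notin> G \<and> (\<forall>s'. P x (d' x) s' \<noteq> 0 \<longrightarrow> s' \<in> Mn)" if x: "x \<in> Mn" for x
    proof -
      have xC: "x \<in> ?C" and vx: "?v x = m" using x unfolding Mn_def by auto
      have dx: "d' x = st x" using x unfolding d'_def by simp
      have "s' \<in> Mn" if "P x (d' x) s' \<noteq> 0" for s'
      proof -
        have sC: "s' \<in> ?C" using stp[OF xC] that dx by auto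
        have "(- ?v) s' = - m"
        proof (rule sum_P_eq[OF mdp, of "d' x" x "- ?v" "- m" s'])
          show "d' x \<in> enabled P x" using stp[OF xC] dx by simp
          show "\<And>s'. P x (d' x) s' \<noteq> 0 \<Longrightarrow> (- ?v) s' \<le> - m" using stp[OF xC] dx um by auto
          have "(\<Sum>s'\<in>UNIV. P x (d' x) s' * ?v s') \<le> m" using E2[OF tG[OF xC], of "d' x"] vx stp[OF xC] dx by simp
          then show "- m \<le> (\<Sum>s'\<in>UNIV. P x (d' x) s' * (- ?v) s')" by (simp add: sum_negf)
          show "P x (d' x) s' \<noteq> 0" by fact
        qed
        then show ?thesis using sC unfolding Mn_def by simp
      qed
      then show ?thesis using tG[OF xC] by blast
    qed
    have le: "?v y \<le> vd P G w d' y" for y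
    proof (rule improve[OF mdp md md'])
      fix z assume zG: "z \<notin> G"
      show "?v z \<le> (\<Sum>s'\<in>UNIV. P z (d' z) s' * ?v s')"
      proof (cases "z \<in> Mn")
        case True then show ?thesis using geM[OF True] unfolding Mn_def by auto
      next
        case False then show ?thesis using vd_fix[OF mdp md zG] unfolding d'_def by simp
      qed
    next
      fix z assume "z \<notin> G" "d' z \<noteq> d z"
      then have "z \<in> Mn" unfolding d'_def by (cases "z \<in> Mn") auto
      then show "?v z < (\<Sum>s'\<in>UNIV. P z (d' z) s' * ?v s') \<or> ?v z \<le> 0"
        using mneg unfolding Mn_def by auto
    qed
    have "vd P G w d' t1 = 0" by (rule vd_closed[OF mdp md' cl t1]) auto
    moreover have "?v t1 = m" using t1 unfolding Mn_def by simp
    ultimately have "?v t1 < vd P G w d' t1" using mneg by simp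
    then show False using noimp[OF md' le] by blast
  qed
  show ?thesis using md E2 E0 by blast
qed

lemma core:
  assumes mdp: "is_mdp P"
  shows "\<exists>d. is_md_sched P d \<and> (\<forall>\<sigma> h s. is_sched P \<sigma> \<longrightarrow>
     lim (\<lambda>N. V P \<sigma> G w (\<lambda>_. 0) N h s) \<le> lim (\<lambda>N. V P (md_to_sched d) G w (\<lambda>_. 0) N [] s))"
proof -
  obtain d where md: "is_md_sched P d"
    and E2: "\<forall>x \<alpha>. x \<notin> G \<longrightarrow> \<alpha> \<in> enabled P x \<longrightarrow> (\<Sum>s'\<in>UNIV. P x \<alpha> s' * vd P G w d s') \<le> vd P G w d x"
    and E0: "\<forall>x\<in>Cset P (enabled P) G. 0 \<le> vd P G w d x"
    using opt_exists[OF mdp] by blast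
  have "lim (\<lambda>N. V P \<sigma> G w (\<lambda>_. 0) N h s) \<le> vd P G w d s" if "is_sched P \<sigma>" for \<sigma> h s
    by (rule dominate[OF mdp _ order_refl]) (use that is_sched_on vd_G E2 E0 in auto)
  moreover have "vd P G w d s = lim (\<lambda>N. V P (md_to_sched d) G w (\<lambda>_. 0) N [] s)" for s
    unfolding vd_def V_md ..
  ultimately show ?thesis using md by auto
qed



lemma lim_reach: "is_mdp P \<Longrightarrow> is_sched P \<sigma> \<Longrightarrow> lim (\<lambda>N. V P \<sigma> T (\<lambda>_. 1) (\<lambda>_. 0) N [] s) = reach_prob P \<sigma> s T"
  using reach_prob_lim by (rule limI)

lemma max_reach:
  assumes "is_mdp P"
  shows "\<exists>d. is_md_sched P d \<and> (\<forall>\<sigma> s. is_sched P \<sigma> \<longrightarrow> reach_prob P \<sigma> s T \<le> reach_prob P (md_to_sched d) s T)"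
proof -
  obtain d where d: "is_md_sched P d" and le: "\<forall>\<sigma> h s. is_sched P \<sigma> \<longrightarrow>
     lim (\<lambda>N. V P \<sigma> T (\<lambda>_. 1) (\<lambda>_. 0) N h s) \<le> lim (\<lambda>N. V P (md_to_sched d) T (\<lambda>_. 1) (\<lambda>_. 0) N [] s)"
    using core[OF assms, of T "\<lambda>_. 1"] by blast
  show ?thesis using d le lim_reach[OF assms] md_is_sched[OF d] by metis
qed

lemma min_reach:
  assumes "is_mdp P"
  shows "\<exists>d. is_md_sched P d \<and> (\<forall>\<sigma> s. is_sched P \<sigma> \<longrightarrow> reach_prob P (md_to_sched d) s T \<le> reach_prob P \<sigma> s T)"
proof -
  obtain d where d: "is_md_sched P d" and le: "\<forall>\<sigma> h s. is_sched P \<sigma> \<longrightarrow>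
     lim (\<lambda>N. V P \<sigma> T (\<lambda>_. -1) (\<lambda>_. 0) N h s) \<le> lim (\<lambda>N. V P (md_to_sched d) T (\<lambda>_. -1) (\<lambda>_. 0) N [] s)"
    using core[OF assms, of T "\<lambda>_. -1"] by blast
  have neg: "lim (\<lambda>N. V P \<sigma> T (\<lambda>_. -1) (\<lambda>_. 0) N [] s) = - reach_prob P \<sigma> s T" if "is_sched P \<sigma>" for \<sigma> s
  proof -
    have e: "V P \<sigma> T (\<lambda>_. -1) (\<lambda>_. 0) N [] s = (-1) * V P \<sigma> T (\<lambda>_. 1) (\<lambda>_. 0) N [] s" for N
      by (rule V_scale) auto
    have "(\<lambda>N. (-1) * V P \<sigma> T (\<lambda>_. 1) (\<lambda>_. 0) N [] s) \<longlonglongrightarrow> (-1) * reach_prob P \<sigma> s T"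
      by (rule tendsto_mult_left[OF reach_prob_lim[OF assms that]])
    then show ?thesis unfolding e by (simp add: limI)
  qed
  have "reach_prob P (md_to_sched d) s T \<le> reach_prob P \<sigma> s T" if "is_sched P \<sigma>" for \<sigma> s
    using le[rule_format, OF that, of "[]" s] neg[OF that] neg[OF md_is_sched[OF d]] by simp
  then show ?thesis using d by blast
qed

lemma absorb_zero:
  assumes mdp: "is_mdp P" and sc: "is_sched P \<sigma>" and ab: "absorbing_set P T'" and t: "t \<in> T'" "t \<notin> T"
  shows "reach_within P \<sigma> T N h t = 0"
proof (induction N arbitrary: h)
  case 0 then show ?case using t by simp
next
  case (Suc N)
  have "\<sigma> h t \<alpha> * (\<Sum>s'\<in>UNIV. P t \<alpha> s' * reach_within P \<sigma> T N (h @ [(t, \<alpha>)]) s') = 0" for \<alpha>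
  proof (cases "\<sigma> h t \<alpha> = 0")
    case False
    then have en: "\<alpha> \<in> enabled P t" using sc unfolding is_sched_def by auto
    then have P1: "P t \<alpha> t = 1" using ab t unfolding absorbing_set_def by auto
    have "P t \<alpha> s' = 0" if "s' \<noteq> t" for s'
    proof -
      have "(\<Sum>x\<in>UNIV. P t \<alpha> x) = P t \<alpha> t + (\<Sum>x\<in>UNIV - {t}. P t \<alpha> x)"
        by (simp add: sum.remove)
      then have "(\<Sum>x\<in>UNIV - {t}. P t \<alpha> x) = 0" using enabled_sum[OF en] P1 by simp
      then show ?thesis using that mdp_nonneg[OF mdp] by (simp add: sum_nonneg_eq_0_iff)
    qed
    then have "P t \<alpha> s' * reach_within P \<sigma> T N (h @ [(t, \<alpha>)]) s' = 0" for s'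
      using Suc by (cases "s' = t") auto
    then show ?thesis by (simp add: sum.neutral)
  qed simp
  then have "(\<Sum>\<alpha>\<in>UNIV. \<sigma> h t \<alpha> * (\<Sum>s'\<in>UNIV. P t \<alpha> s' * reach_within P \<sigma> T N (h @ [(t, \<alpha>)]) s')) = 0"
    by (simp only: sum.neutral_const)
  then show ?case using t by simp
qed

lemma absorb_sum:
  assumes mdp: "is_mdp P" and sc: "is_sched P \<sigma>" and fin: "finite I"
    and ab: "\<And>i. i \<in> I \<Longrightarrow> absorbing_set P (Tf i)"
  shows "(\<Sum>i\<in>I. q i * reach_within P \<sigma> (Tf i) N h s)
    = V P \<sigma> (\<Union>i\<in>I. Tf i) (\<lambda>t. \<Sum>i\<in>I. q i * (if t \<in> Tf i then 1 else 0)) (\<lambda>_. 0) N h s"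
proof (induction N arbitrary: h s)
  case 0 then show ?case by (auto intro: sum.neutral)
next
  case (Suc N)
  show ?case
  proof (cases "s \<in> (\<Union>i\<in>I. Tf i)")
    case True
    then obtain i0 where i0: "i0 \<in> I" "s \<in> Tf i0" by auto
    have "reach_within P \<sigma> (Tf i) (Suc N) h s = (if s \<in> Tf i then 1 else 0)" if "i \<in> I" for i
      using absorb_zero[OF mdp sc ab[OF i0(1)] i0(2), of "Tf i" "Suc N" h] by auto
    then show ?thesis using True by (simp cong: sum.cong)
  next
    case False
    then have nT: "\<And>i. i \<in> I \<Longrightarrow> s \<notin> Tf i" by auto
    have "(\<Sum>i\<in>I. q i * reach_within P \<sigma> (Tf i) (Suc N) h s)
      = (\<Sum>i\<in>I. q i * (\<Sum>\<alpha>\<in>UNIV. \<sigma> h s \<alpha> * (\<Sum>s'\<in>UNIV. P s \<alpha> s' * reach_within P \<sigma> (Tf i) N (h @ [(s, \<alpha>)]) s')))"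
      using nT by (intro sum.cong) auto
    also have "\<dots> = (\<Sum>\<alpha>\<in>UNIV. \<sigma> h s \<alpha> * (\<Sum>s'\<in>UNIV. P s \<alpha> s' * (\<Sum>i\<in>I. q i * reach_within P \<sigma> (Tf i) N (h @ [(s, \<alpha>)]) s')))"
    proof -
      let ?R = "\<lambda>i \<alpha> s'. reach_within P \<sigma> (Tf i) N (h @ [(s, \<alpha>)]) s'"
      have "(\<Sum>i\<in>I. q i * (\<Sum>\<alpha>\<in>UNIV. \<sigma> h s \<alpha> * (\<Sum>s'\<in>UNIV. P s \<alpha> s' * ?R i \<alpha> s')))
        = (\<Sum>i\<in>I. \<Sum>\<alpha>\<in>UNIV. \<Sum>s'\<in>UNIV. q i * (\<sigma> h s \<alpha> * (P s \<alpha> s' * ?R i \<alpha> s')))"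
        by (simp only: sum_distrib_left)
      also have "\<dots> = (\<Sum>\<alpha>\<in>UNIV. \<Sum>s'\<in>UNIV. \<Sum>i\<in>I. q i * (\<sigma> h s \<alpha> * (P s \<alpha> s' * ?R i \<alpha> s')))"
        by (subst sum.swap, rule sum.cong[OF refl], rule sum.swap)
      also have "\<dots> = (\<Sum>\<alpha>\<in>UNIV. \<Sum>s'\<in>UNIV. \<Sum>i\<in>I. \<sigma> h s \<alpha> * (P s \<alpha> s' * (q i * ?R i \<alpha> s')))"
        by (intro sum.cong refl) (simp only: mult.left_commute)
      also have "\<dots> = (\<Sum>\<alpha>\<in>UNIV. \<sigma> h s \<alpha> * (\<Sum>s'\<in>UNIV. P s \<alpha> s' * (\<Sum>i\<in>I. q i * ?R i \<alpha> s')))"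
        by (simp only: sum_distrib_left)
      finally show ?thesis .
    qed
    also have "\<dots> = V P \<sigma> (\<Union>i\<in>I. Tf i) (\<lambda>t. \<Sum>i\<in>I. q i * (if t \<in> Tf i then 1 else 0)) (\<lambda>_. 0) (Suc N) h s"
      using False by (simp add: Suc.IH)
    finally show ?thesis .
  qed
qed

lemma group_b:
  assumes mdp: "is_mdp P" and fin: "finite I" and ab: "\<And>i. i \<in> I \<Longrightarrow> absorbing_set P (Tf i)"
  shows "\<exists>d. is_md_sched P d \<and> (\<forall>\<sigma> s. is_sched P \<sigma> \<longrightarrow>
     (\<Sum>i\<in>I. q i * reach_prob P \<sigma> s (Tf i)) \<le> (\<Sum>i\<in>I. q i * reach_prob P (md_to_sched d) s (Tf i)))"
proof -
  let ?G = "\<Union>i\<in>I. Tf i"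
  let ?w = "\<lambda>t. \<Sum>i\<in>I. q i * (if t \<in> Tf i then 1 else 0)"
  obtain d where d: "is_md_sched P d" and le: "\<forall>\<sigma> h s. is_sched P \<sigma> \<longrightarrow>
     lim (\<lambda>N. V P \<sigma> ?G ?w (\<lambda>_. 0) N h s) \<le> lim (\<lambda>N. V P (md_to_sched d) ?G ?w (\<lambda>_. 0) N [] s)"
    using core[OF mdp, of ?G ?w] by blast
  have L: "lim (\<lambda>N. V P \<sigma> ?G ?w (\<lambda>_. 0) N [] s) = (\<Sum>i\<in>I. q i * reach_prob P \<sigma> s (Tf i))"
    if sc: "is_sched P \<sigma>" for \<sigma> s
  proof -
    have "(\<lambda>N. \<Sum>i\<in>I. q i * V P \<sigma> (Tf i) (\<lambda>_. 1) (\<lambda>_. 0) N [] s) \<longlonglongrightarrow> (\<Sum>i\<in>I. q i * reach_prob P \<sigma> s (Tf i))"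
      by (intro tendsto_sum tendsto_mult_left reach_prob_lim[OF mdp sc])
    then have "(\<lambda>N. V P \<sigma> ?G ?w (\<lambda>_. 0) N [] s) \<longlonglongrightarrow> (\<Sum>i\<in>I. q i * reach_prob P \<sigma> s (Tf i))"
      using absorb_sum[OF mdp sc fin ab, where q=q, unfolded reach_V] by (simp only:)
    then show ?thesis by (rule limI)
  qed
  have "(\<Sum>i\<in>I. q i * reach_prob P \<sigma> s (Tf i)) \<le> (\<Sum>i\<in>I. q i * reach_prob P (md_to_sched d) s (Tf i))"
    if sc: "is_sched P \<sigma>" for \<sigma> s
    using le[rule_format, OF sc, of "[]" s] L[OF sc, of s] L[OF md_is_sched[OF d], of s] by simp
  then show ?thesis using d by blast
qed



definition Fg :: "('s::finite \<Rightarrow> 'a::finite \<Rightarrow> 's \<Rightarrow> real) \<Rightarrow> nat \<Rightarrow> (nat \<Rightarrow> rat)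
    \<Rightarrow> (nat \<Rightarrow> 's) \<Rightarrow> (nat \<Rightarrow> nat) \<Rightarrow> (nat \<Rightarrow> 's set) \<Rightarrow> nat \<Rightarrow> ('s, 'a) sched \<Rightarrow> real" where
  "Fg P m q s k T j \<tau> = (\<Sum>i\<in>{i. i \<in> {..<m} \<and> k i = j}. real_of_rat (q i) * reach_prob P \<tau> (s i) (T i))"

lemma value_group:
  assumes "relreach_wf n m k"
  shows "relreach_value P m q s k T \<sigma>s = (\<Sum>j<n. Fg P m q s k T j (\<sigma>s j))"
proof -
  let ?h = "\<lambda>i. real_of_rat (q i) * reach_prob P (\<sigma>s (k i)) (s i) (T i)"
  have img: "k ` {..<m} \<subseteq> {..<n}" using assms unfolding relreach_wf_def by simp
  have "relreach_value P m q s k T \<sigma>s = (\<Sum>i\<in>{..<m}. ?h i)" unfolding relreach_value_def by simp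
  also have "\<dots> = (\<Sum>j\<in>{..<n}. \<Sum>i\<in>{i. i \<in> {..<m} \<and> k i = j}. ?h i)"
    by (rule sum.group[symmetric]) (use img in auto)
  also have "\<dots> = (\<Sum>j<n. Fg P m q s k T j (\<sigma>s j))"
    unfolding Fg_def by (intro sum.cong refl) auto
  finally show ?thesis .
qed

lemma group_opt:
  assumes mdp: "is_mdp P" and wf: "relreach_wf n m k"
    and cond: "n = m
      \<or> ((\<forall>i<m. \<forall>i'<m. k i = k i' \<longrightarrow> s i = s i') \<and> (\<forall>i<m. absorbing_set P (T i)))
      \<or> (\<forall>i<m. \<forall>i'<m. k i = k i' \<longrightarrow> ((q i \<ge> 0 \<longleftrightarrow> q i' \<ge> 0) \<and> T i = T i'))"
    and j: "j < n" and sc: "is_sched P \<tau>"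
  shows "(\<exists>d. is_md_sched P d \<and> Fg P m q s k T j \<tau> \<le> Fg P m q s k T j (md_to_sched d))
       \<and> (\<exists>d. is_md_sched P d \<and> Fg P m q s k T j (md_to_sched d) \<le> Fg P m q s k T j \<tau>)"
proof -
  have "j \<in> k ` {..<m}" using wf j unfolding relreach_wf_def by auto
  then obtain i0 where i0: "i0 < m" "k i0 = j" by auto
  define I where "I = {i. i \<in> {..<m} \<and> k i = j}"
  have finI: "finite I" unfolding I_def by simp
  have F: "Fg P m q s k T j \<tau>' = (\<Sum>i\<in>I. real_of_rat (q i) * reach_prob P \<tau>' (s i) (T i))" for \<tau>'
    unfolding Fg_def I_def ..
  have C_case: ?thesis if C: "\<forall>i<m. \<forall>i'<m. k i = k i' \<longrightarrow> ((q i \<ge> 0 \<longleftrightarrow> q i' \<ge> 0) \<and> T i = T i')"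
  proof -
    have TI: "T i = T i0" and sg: "(q i \<ge> 0 \<longleftrightarrow> q i0 \<ge> 0)" if "i \<in> I" for i
    proof -
      have ii: "i < m" "k i = k i0" using that i0 unfolding I_def by auto
      have "(0 \<le> q i \<longleftrightarrow> 0 \<le> q i0) \<and> T i = T i0" using C[rule_format, OF ii(1) i0(1) ii(2)] .
      then show "T i = T i0" "(q i \<ge> 0 \<longleftrightarrow> q i0 \<ge> 0)" by auto
    qed
    obtain dM where dM: "is_md_sched P dM" "\<forall>\<sigma> s. is_sched P \<sigma> \<longrightarrow> reach_prob P \<sigma> s (T i0) \<le> reach_prob P (md_to_sched dM) s (T i0)"
      using max_reach[OF mdp] by blast
    obtain dm where dm: "is_md_sched P dm" "\<forall>\<sigma> s. is_sched P \<sigma> \<longrightarrow> reach_prob P (md_to_sched dm) s (T i0) \<le> reach_prob P \<sigma> s (T i0)"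
      using min_reach[OF mdp] by blast
    show ?thesis
    proof (cases "q i0 \<ge> 0")
      case True
      then have qn: "0 \<le> real_of_rat (q i)" if "i \<in> I" for i using sg[OF that] by simp
      have "Fg P m q s k T j \<tau> \<le> Fg P m q s k T j (md_to_sched dM)"
        unfolding F by (intro sum_mono mult_left_mono) (use qn TI dM sc in auto)
      moreover have "Fg P m q s k T j (md_to_sched dm) \<le> Fg P m q s k T j \<tau>"
        unfolding F by (intro sum_mono mult_left_mono) (use qn TI dm sc in auto)
      ultimately show ?thesis using dM dm by blast
    next
      case False
      then have qn: "real_of_rat (q i) \<le> 0" if "i \<in> I" for i using sg[OF that] by simp
      have "Fg P m q s k T j \<tau> \<le> Fg P m q s k T j (md_to_sched dm)"
        unfolding F by (intro sum_mono mult_left_mono_neg) (use qn TI dm sc in auto)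
      moreover have "Fg P m q s k T j (md_to_sched dM) \<le> Fg P m q s k T j \<tau>"
        unfolding F by (intro sum_mono mult_left_mono_neg) (use qn TI dM sc in auto)
      ultimately show ?thesis using dM dm by blast
    qed
  qed
  show ?thesis
  proof (cases "n = m")
    case True
    have "card (k ` {..<m}) = card {..<m}" using wf True unfolding relreach_wf_def by simp
    then have "inj_on k {..<m}" by (simp add: inj_on_iff_eq_card)
    then have "\<forall>i<m. \<forall>i'<m. k i = k i' \<longrightarrow> ((q i \<ge> 0 \<longleftrightarrow> q i' \<ge> 0) \<and> T i = T i')"
      by (auto dest: inj_onD)
    then show ?thesis by (rule C_case)
  next
    case nA: False
    show ?thesis
    proof (cases "(\<forall>i<m. \<forall>i'<m. k i = k i' \<longrightarrow> s i = s i') \<and> (\<forall>i<m. absorbing_set P (T i))")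
      case True
      have sI: "s i = s i0" if "i \<in> I" for i
      proof -
        have ii: "i < m" "k i = k i0" using that i0 unfolding I_def by auto
        show ?thesis using True ii i0(1) by blast
      qed
      have ab: "absorbing_set P (T i)" if "i \<in> I" for i
      proof -
        have ii: "i < m" using that unfolding I_def by auto
        show ?thesis using True ii by blast
      qed
      have F': "Fg P m q s k T j \<tau>' = (\<Sum>i\<in>I. real_of_rat (q i) * reach_prob P \<tau>' (s i0) (T i))" for \<tau>'
        unfolding F by (intro sum.cong refl) (simp add: sI)
      obtain dM where dM: "is_md_sched P dM" "\<forall>\<sigma> s. is_sched P \<sigma> \<longrightarrow>
          (\<Sum>i\<in>I. real_of_rat (q i) * reach_prob P \<sigma> s (T i)) \<le> (\<Sum>i\<in>I. real_of_rat (q i) * reach_prob P (md_to_sched dM) s (T i))"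
        using group_b[where Tf=T and q="\<lambda>i. real_of_rat (q i)", OF mdp finI ab] by blast
      obtain dm where dm: "is_md_sched P dm" "\<forall>\<sigma> s. is_sched P \<sigma> \<longrightarrow>
          (\<Sum>i\<in>I. - real_of_rat (q i) * reach_prob P \<sigma> s (T i)) \<le> (\<Sum>i\<in>I. - real_of_rat (q i) * reach_prob P (md_to_sched dm) s (T i))"
        using group_b[where Tf=T and q="\<lambda>i. - real_of_rat (q i)", OF mdp finI ab] by blast
      have "Fg P m q s k T j \<tau> \<le> Fg P m q s k T j (md_to_sched dM)"
        unfolding F' using dM(2) sc by blast
      moreover have "Fg P m q s k T j (md_to_sched dm) \<le> Fg P m q s k T j \<tau>"
        unfolding F' using dm(2)[rule_format, OF sc, of "s i0"] by (simp add: sum_negf)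
      ultimately show ?thesis using dM dm by blast
    next
      case False
      then show ?thesis using cond nA C_case by blast
    qed
  qed
qed

theorem corollary1:
  fixes P :: "'s::finite \<Rightarrow> 'a::finite \<Rightarrow> 's \<Rightarrow> real"
    and n m :: nat and q :: "nat \<Rightarrow> rat" and c :: rat
    and s :: "nat \<Rightarrow> 's" and k :: "nat \<Rightarrow> nat" and T :: "nat \<Rightarrow> 's set"
    and cmp :: comparison
  assumes "is_mdp P"
    and "relreach_wf n m k"
    and "\<forall>\<epsilon>. cmp = NotApprox \<epsilon> \<longrightarrow> \<epsilon> \<ge> 0"
    and "n = m
      \<or> ((\<forall>i<m. \<forall>i'<m. k i = k i' \<longrightarrow> s i = s i') \<and> (\<forall>i<m. absorbing_set P (T i)))
      \<or> (\<forall>i<m. \<forall>i'<m. k i = k i' \<longrightarrow> ((q i \<ge> 0 \<longleftrightarrow> q i' \<ge> 0) \<and> T i = T i'))"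
  shows "relreach_general P n m q s k T cmp c \<longleftrightarrow> relreach_md P n m q s k T cmp c"
proof
  assume "relreach_general P n m q s k T cmp c"
  then obtain \<sigma>s where sch: "\<forall>j<n. is_sched P (\<sigma>s j)"
    and hc: "holds_comp cmp (relreach_value P m q s k T \<sigma>s) (real_of_rat c)"
    unfolding relreach_general_def by blast
  let ?F = "Fg P m q s k T"
  have opt: "(\<exists>d. is_md_sched P d \<and> ?F j (\<sigma>s j) \<le> ?F j (md_to_sched d))
       \<and> (\<exists>d. is_md_sched P d \<and> ?F j (md_to_sched d) \<le> ?F j (\<sigma>s j))" if "j < n" for j
    using group_opt[OF assms(1,2,4) that] sch that by blast
  define dM where "dM j = (SOME d. is_md_sched P d \<and> ?F j (\<sigma>s j) \<le> ?F j (md_to_sched d))" for j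
  define dm where "dm j = (SOME d. is_md_sched P d \<and> ?F j (md_to_sched d) \<le> ?F j (\<sigma>s j))" for j
  have dM: "is_md_sched P (dM j) \<and> ?F j (\<sigma>s j) \<le> ?F j (md_to_sched (dM j))" if "j < n" for j
  proof -
    have e: "\<exists>d. is_md_sched P d \<and> ?F j (\<sigma>s j) \<le> ?F j (md_to_sched d)" using opt[OF that] by blast
    show ?thesis unfolding dM_def by (rule someI_ex[OF e])
  qed
  have dm: "is_md_sched P (dm j) \<and> ?F j (md_to_sched (dm j)) \<le> ?F j (\<sigma>s j)" if "j < n" for j
  proof -
    have e: "\<exists>d. is_md_sched P d \<and> ?F j (md_to_sched d) \<le> ?F j (\<sigma>s j)" using opt[OF that] by blast
    show ?thesis unfolding dm_def by (rule someI_ex[OF e])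
  qed
  let ?x = "relreach_value P m q s k T \<sigma>s"
  let ?yM = "relreach_value P m q s k T (\<lambda>j. md_to_sched (dM j))"
  let ?ym = "relreach_value P m q s k T (\<lambda>j. md_to_sched (dm j))"
  have xM: "?x \<le> ?yM" unfolding value_group[OF assms(2)] by (rule sum_mono) (use dM in auto)
  have xm: "?ym \<le> ?x" unfolding value_group[OF assms(2)] by (rule sum_mono) (use dm in auto)
  have mdM: "\<forall>j<n. is_md_sched P (dM j)" and mdm: "\<forall>j<n. is_md_sched P (dm j)" using dM dm by auto
  show "relreach_md P n m q s k T cmp c"
  proof (cases cmp)
    case Geq
    then have "holds_comp cmp ?yM (real_of_rat c)" using hc xM by simp
    then show ?thesis unfolding relreach_md_def using mdM by blast
  next
    case Gt
    then have "holds_comp cmp ?yM (real_of_rat c)" using hc xM by simp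
    then show ?thesis unfolding relreach_md_def using mdM by blast
  next
    case (NotApprox e)
    show ?thesis
    proof (cases "?x \<ge> real_of_rat c")
      case True
      then have "holds_comp cmp ?yM (real_of_rat c)" using hc xM NotApprox by auto
      then show ?thesis unfolding relreach_md_def using mdM by blast
    next
      case False
      then have "holds_comp cmp ?ym (real_of_rat c)" using hc xm NotApprox by auto
      then show ?thesis unfolding relreach_md_def using mdm by blast
    qed
  qed
next
  assume "relreach_md P n m q s k T cmp c"
  then obtain ds where ds: "\<forall>j<n. is_md_sched P (ds j)"
    and hc: "holds_comp cmp (relreach_value P m q s k T (\<lambda>j. md_to_sched (ds j))) (real_of_rat c)"
    unfolding relreach_md_def by blast
  have "\<forall>j<n. is_sched P (md_to_sched (ds j))" using ds md_is_sched by blast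
  then show "relreach_general P n m q s k T cmp c"
    unfolding relreach_general_def using hc by (intro exI[of _ "\<lambda>j. md_to_sched (ds j)"]) simp
qed

end
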